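(* Let $G\in\mathbb{R}^{z_1\times\cdots\times z_n}$ and, for $k=1,\dots,n$, let $H_k\in\mathbb{R}^{m_{k,1}\times\cdots\times m_{k,d_k}}$ with $d_k\ge1$. Let $T=G\circledast[H_1,\dots,H_n]$, a tensor with dimensions indexed by pairs $(k,i)$, $1\le k\le n$, $1\le i\le d_k$, of sizes $s_{k,i}=z_k+m_{k,i}-1$. Then for every $k$ and $i$, $$\operatorname{rank}([k,i],T)\le\begin{cases}\min\big(s_{k,1},\operatorname{rank}(k,G)\big), & \text{if } H_k \text{ is one-dimensional } (d_k=1),\\ \min\big(s_{k,i},\,z_k\operatorname{rank}(i,H_k)\big), & \text{otherwise.}\end{cases}$$
   Context: Tensors are indexed from $0$ and regarded as functions on $\mathbb{Z}^d$ vanishing outside their index ranges. The outer convolution $T=G\circledast[H_1,\dots,H_n]$ is the tensor of order $\sum_k d_k$ with entries $T(t_{1,1},\dots,t_{1,d_1};\dots;t_{n,1},\dots,t_{n,d_n})=\sum_{\tau_1,\dots,\tau_n}G(\tau_1,\dots,\tau_n)\prod_{k=1}^n H_k(t_{k,1}-\tau_k,\,t_{k,2}-\tau_k,\dots,t_{k,d_k}-\tau_k)$, for $t_{k,i}\in\{0,\dots,z_k+m_{k,i}-2\}$. For a tensor $A$, $\operatorname{rank}(j,A)$ is the $j$-th Tucker rank, i.e. the rank of the mode-$j$ matricization of $A$ (for a matrix, its rank; a one-dimensional vector has rank $1$); $\operatorname{rank}([k,i],T)$ is the Tucker rank of $T$ along the dimension indexed by $(k,i)$. *)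

theory Defs
  imports Complex_Main "HOL-Library.Function_Algebras"
begin

text \<open>Tensors are real-valued functions on integer index lists (points of Z^d),
  vanishing outside their index box. Indices are 0-based.\<close>

definition tbox :: "nat list \<Rightarrow> int list set" where
  "tbox ds = {xs. length xs = length ds \<and> (\<forall>i<length ds. 0 \<le> xs ! i \<and> xs ! i < int (ds ! i))}"

definition is_tensor :: "nat list \<Rightarrow> (int list \<Rightarrow> real) \<Rightarrow> bool" where
  "is_tensor ds A \<longleftrightarrow> (\<forall>xs. xs \<notin> tbox ds \<longrightarrow> A xs = 0)"

definition frank :: "('a \<Rightarrow> real) set \<Rightarrow> nat" where
  "frank S = vector_space.dim (\<lambda>c (f::'a \<Rightarrow> real) x. c * f x) S"

text \<open>Tucker rank along mode j of a tensor with N = size of mode j: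
  rank of the mode-j matricization = dimension of the span of its rows,
  row a being the function of the remaining indices.\<close>
definition tucker_rank :: "nat \<Rightarrow> nat \<Rightarrow> (int list \<Rightarrow> real) \<Rightarrow> nat" where
  "tucker_rank j N A = frank ((\<lambda>a r. A (take j r @ a # drop j r)) ` {0..<int N})"

text \<open>Tensors with dimensions indexed by pairs (k,i): indices are lists of lists.\<close>
definition tbox2 :: "nat list list \<Rightarrow> int list list set" where
  "tbox2 ss = {tt. length tt = length ss \<and> (\<forall>k<length ss. tt ! k \<in> tbox (ss ! k))}"

definition tucker_rank2 :: "nat \<Rightarrow> nat \<Rightarrow> nat \<Rightarrow> (int list list \<Rightarrow> real) \<Rightarrow> nat" where
  "tucker_rank2 k i N T =
     frank ((\<lambda>a tt. T (tt[k := take i (tt ! k) @ a # drop i (tt ! k)])) ` {0..<int N})"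

definition oconv_dims :: "nat list \<Rightarrow> nat list list \<Rightarrow> nat list list" where
  "oconv_dims z m = map (\<lambda>k. map (\<lambda>mi. z ! k + mi - 1) (m ! k)) [0..<length z]"

definition outer_conv ::
  "nat list \<Rightarrow> nat list list \<Rightarrow> (int list \<Rightarrow> real) \<Rightarrow> (nat \<Rightarrow> int list \<Rightarrow> real)
     \<Rightarrow> int list list \<Rightarrow> real" where
  "outer_conv z m G H tt =
     (if tt \<in> tbox2 (oconv_dims z m) then
        (\<Sum>\<tau>\<in>tbox z. G \<tau> * (\<Prod>k<length z. H k (map (\<lambda>t. t - \<tau> ! k) (tt ! k))))
      else 0)"

end

theory Submission
  imports Defs
begin

lemma sum_fun_apply: "(sum f A) x = (\<Sum>a\<in>A. f a x)"
  by (induction A rule: infinite_finite_induct) auto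

lemma vs: "vector_space (\<lambda>c (f::'a \<Rightarrow> real) x. c * f x)"
  by unfold_locales (auto simp: fun_eq_iff algebra_simps)

lemma ms: "module (\<lambda>c (f::'a \<Rightarrow> real) x. c * f x)"
  using vs module_iff_vector_space by blast

lemma span_coeffs:
  assumes "finite B" "f \<in> module.span (\<lambda>c (f::'a \<Rightarrow> real) x. c * f x) B"
  shows "\<exists>v. f = (\<lambda>x. \<Sum>\<beta>\<in>B. v \<beta> * \<beta> x)"
proof -
  from assms module.span_finite[OF ms, of B] obtain u where
    "f = (\<Sum>v\<in>B. (\<lambda>x. u v * v x))" by auto
  then show ?thesis by (auto simp: sum_fun_apply fun_eq_iff)
qed

lemma in_span_coeffs:
  assumes "f = (\<lambda>x. \<Sum>\<beta>\<in>B. v \<beta> * \<beta> x)"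
  shows "f \<in> module.span (\<lambda>c (f::'a \<Rightarrow> real) x. c * f x) B"
proof -
  have "f = (\<Sum>\<beta>\<in>B. (\<lambda>x. v \<beta> * \<beta> x))" using assms by (auto simp: sum_fun_apply fun_eq_iff)
  also have "\<dots> \<in> module.span (\<lambda>c (f::'a \<Rightarrow> real) x. c * f x) B"
  proof (intro module.span_sum[OF ms])
    fix \<beta> assume "\<beta> \<in> B"
    then show "(\<lambda>x. v \<beta> * \<beta> x) \<in> module.span (\<lambda>c (f::'a \<Rightarrow> real) x. c * f x) B"
      using module.span_scale[OF ms module.span_base[OF ms], of \<beta> B "v \<beta>"] by simp
  qed
  finally show ?thesis .
qed

lemma frank_le_card:
  assumes "finite W" "\<And>a. a \<in> A \<Longrightarrow> \<exists>v. R a = (\<lambda>x. \<Sum>w\<in>W. v w * w x)"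
  shows "frank (R ` A) \<le> card W"
  unfolding frank_def
  by (rule vector_space.dim_le_card[OF vs]) (use assms in_span_coeffs in blast)+

lemma frank_le_N: "frank (f ` {0..<int N}) \<le> N"
proof -
  have "frank (f ` {0..<int N}) \<le> card (f ` {0..<int N})"
    unfolding frank_def
    by (rule vector_space.dim_le_card[OF vs]) (auto intro: module.span_base[OF ms])
  also have "\<dots> \<le> N" using card_image_le[of "{0..<int N}" f] by simp
  finally show ?thesis .
qed

lemma frank_basis:
  assumes "finite A"
  obtains B where "finite B" "card B = frank (R ` A)"
    "\<And>a. a \<in> A \<Longrightarrow> \<exists>v. R a = (\<lambda>x. \<Sum>\<beta>\<in>B. v \<beta> * \<beta> x)"
proof -
  obtain B where B: "B \<subseteq> R ` A" "module.span (\<lambda>c f x. c * f x) B \<supseteq> R ` A"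
    "card B = frank (R ` A)"
    using vector_space.basis_exists[OF vs, of "R ` A"] unfolding frank_def by metis
  have f: "finite B" using B(1) assms finite_subset by blast
  show ?thesis
    by (rule that[OF f B(3)]) (use B(2) span_coeffs[OF f] in blast)
qed

definition ins :: "nat \<Rightarrow> 'a \<Rightarrow> 'a list \<Rightarrow> 'a list" where
  "ins i a l = take i l @ a # drop i l"

lemma tbox_upd: "\<tau> \<in> tbox z \<Longrightarrow> k < length z \<Longrightarrow> 0 \<le> c \<Longrightarrow> c < int (z!k) \<Longrightarrow> \<tau>[k:=c] \<in> tbox z"
  by (auto simp: tbox_def nth_list_update)

lemma sum_split:
  assumes "k < length z" "0 < z!k"
  shows "(\<Sum>\<tau>\<in>tbox z. f \<tau>) = (\<Sum>c\<in>{0..<int(z!k)}. \<Sum>\<sigma>\<in>{\<sigma>\<in>tbox z. \<sigma>!k = 0}. f (\<sigma>[k:=c]))"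
proof -
  have "(\<Sum>\<tau>\<in>tbox z. f \<tau>) = (\<Sum>(c,\<sigma>)\<in>{0..<int(z!k)} \<times> {\<sigma>\<in>tbox z. \<sigma>!k = 0}. f (\<sigma>[k:=c]))"
  proof (rule sum.reindex_bij_witness[where j = "\<lambda>\<tau>. (\<tau>!k, \<tau>[k:=0])" and i = "\<lambda>(c,\<sigma>). \<sigma>[k:=c]"])
    fix \<tau> assume t: "\<tau> \<in> tbox z"
    then have l: "length \<tau> = length z" by (simp add: tbox_def)
    show "(case (\<tau> ! k, \<tau>[k := 0]) of (c, \<sigma>) \<Rightarrow> \<sigma>[k := c]) = \<tau>" using l assms by simp
    show "(\<tau> ! k, \<tau>[k := 0]) \<in> {0..<int (z ! k)} \<times> {\<sigma> \<in> tbox z. \<sigma> ! k = 0}"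
      using t assms tbox_upd[OF t assms(1), of 0] l by (auto simp: tbox_def)
    show "(case (\<tau> ! k, \<tau>[k := 0]) of (c, \<sigma>) \<Rightarrow> f (\<sigma>[k := c])) = f \<tau>" using l assms by simp
  next
    fix p assume p: "p \<in> {0..<int (z ! k)} \<times> {\<sigma> \<in> tbox z. \<sigma> ! k = 0}"
    then obtain c \<sigma> where p: "p = (c,\<sigma>)" "0 \<le> c" "c < int (z!k)" "\<sigma> \<in> tbox z" "\<sigma>!k = 0" by auto
    then have l: "length \<sigma> = length z" by (simp add: tbox_def)
    show "((case p of (c, \<sigma>) \<Rightarrow> \<sigma>[k := c]) ! k, (case p of (c, \<sigma>) \<Rightarrow> \<sigma>[k := c])[k := 0]) = p"
    proof -
      have "\<sigma>[k:=0] = \<sigma>" using list_update_id[of \<sigma> k] p(5) by simp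
      then show ?thesis using p l assms by auto
    qed
    show "(case p of (c, \<sigma>) \<Rightarrow> \<sigma>[k := c]) \<in> tbox z" using p tbox_upd assms by auto
  qed
  also have "\<dots> = (\<Sum>c\<in>{0..<int(z!k)}. \<Sum>\<sigma>\<in>{\<sigma>\<in>tbox z. \<sigma>!k = 0}. f (\<sigma>[k:=c]))"
    by (rule sum.cartesian_product[symmetric])
  finally show ?thesis .
qed

lemma ins_nth: "i \<le> length l \<Longrightarrow> p \<le> length l \<Longrightarrow>
  ins i a l ! p = (if p < i then l!p else if p = i then a else l!(p-1))"
  by (auto simp: ins_def nth_append min_def)

lemma length_ins[simp]: "length (ins i a l) = (if i \<le> length l then Suc (length l) else Suc (length l))"
  by (auto simp: ins_def)

lemma ins_tbox:
  assumes "i < length ds" "0 \<le> a" "a < int (ds!i)"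
  shows "ins i a l \<in> tbox ds \<longleftrightarrow> ins i 0 l \<in> tbox ds"
proof (cases "length ds = Suc (length l)")
  case True
  then have il: "i \<le> length l" using assms by simp
  show ?thesis using True il assms
    by (auto simp: tbox_def ins_nth)
next
  case False
  then show ?thesis by (auto simp: tbox_def)
qed

lemma map_ins: "map f (ins i a l) = ins i (f a) (map f l)"
  by (simp add: ins_def take_map drop_map)

lemma guard:
  assumes "k < length ss" "i < length (ss!k)" "0 \<le> a" "a < int (ss!k!i)"
  shows "tt[k:=ins i a (tt!k)] \<in> tbox2 ss \<longleftrightarrow> tt[k:=ins i 0 (tt!k)] \<in> tbox2 ss"
  using assms ins_tbox[OF assms(2-4), of "tt!k"]
  apply (auto simp: tbox2_def nth_list_update)
  by metis+

lemma decomp: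
  fixes z :: "nat list" and m :: "nat list list" and G :: "int list \<Rightarrow> real" and H :: "nat \<Rightarrow> int list \<Rightarrow> real"
  assumes "length m = length z" "k < length z" "i < length (m!k)" "0 < z!k" "0 \<le> a" "a < int (z!k + m!k!i - 1)"
  shows "outer_conv z m G H (tt[k := ins i a (tt!k)]) =
    (if tt[k:=ins i 0 (tt!k)] \<in> tbox2 (oconv_dims z m) then
      (\<Sum>c\<in>{0..<int(z!k)}. \<Sum>\<sigma>\<in>{\<sigma>\<in>tbox z. \<sigma>!k=0}.
         G (\<sigma>[k:=c]) * (\<Prod>j\<in>{..<length z}-{k}. H j (map (\<lambda>t. t - \<sigma>!j) (tt!j)))
           * H k (ins i (a-c) (map (\<lambda>t. t-c) (tt!k))))
     else 0)"
proof -
  define ss where "ss = oconv_dims z m"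
  define P where "P = (\<lambda>\<sigma>. \<Prod>j\<in>{..<length z}-{k}. H j (map (\<lambda>t. t - \<sigma>!j) (tt!j)))"
  have ssk: "length ss = length z" "k < length ss" "ss!k!i = z!k+m!k!i-1" "i < length (ss!k)"
    using assms by (simp_all add: ss_def oconv_dims_def)
  have g: "tt[k:=ins i a (tt!k)] \<in> tbox2 ss \<longleftrightarrow> tt[k:=ins i 0 (tt!k)] \<in> tbox2 ss"
    using guard[OF ssk(2,4), of a tt] assms ssk(3) by simp
  show ?thesis
  proof (cases "tt[k:=ins i 0 (tt!k)] \<in> tbox2 ss")
    case False
    then show ?thesis using g unfolding outer_conv_def ss_def by simp
  next
    case True
    then have lt: "length tt = length z" using ssk by (simp add: tbox2_def)
    have prodeq: "(\<Prod>j<length z. H j (map (\<lambda>t. t - \<tau>!j) ((tt[k:=ins i a (tt!k)])!j)))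
        = H k (ins i (a - \<tau>!k) (map (\<lambda>t. t - \<tau>!k) (tt!k))) * P \<tau>" for \<tau>
    proof -
      have "(\<Prod>j<length z. H j (map (\<lambda>t. t - \<tau>!j) ((tt[k:=ins i a (tt!k)])!j)))
        = H k (map (\<lambda>t. t - \<tau>!k) ((tt[k:=ins i a (tt!k)])!k)) *
          (\<Prod>j\<in>{..<length z}-{k}. H j (map (\<lambda>t. t - \<tau>!j) ((tt[k:=ins i a (tt!k)])!j)))"
        using assms(2) by (simp add: prod.remove)
      also have "(\<Prod>j\<in>{..<length z}-{k}. H j (map (\<lambda>t. t - \<tau>!j) ((tt[k:=ins i a (tt!k)])!j))) = P \<tau>"
        unfolding P_def by (rule prod.cong) auto
      finally show ?thesis using lt assms(2) by (simp add: map_ins)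
    qed
    have Pupd: "\<sigma> \<in> tbox z \<Longrightarrow> P (\<sigma>[k:=c]) = P \<sigma>" for \<sigma> c
      unfolding P_def by (rule prod.cong) auto
    have upk: "\<sigma> \<in> tbox z \<Longrightarrow> \<sigma>[k:=c] ! k = c" for \<sigma> c
      using assms(2) by (simp add: tbox_def)
    have "outer_conv z m G H (tt[k := ins i a (tt!k)]) =
       (\<Sum>\<tau>\<in>tbox z. G \<tau> * (H k (ins i (a - \<tau>!k) (map (\<lambda>t. t - \<tau>!k) (tt!k))) * P \<tau>))"
      using True g unfolding outer_conv_def ss_def[symmetric] by (simp add: prodeq)
    also have "\<dots> = (\<Sum>c\<in>{0..<int(z!k)}. \<Sum>\<sigma>\<in>{\<sigma>\<in>tbox z. \<sigma>!k=0}.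
         G (\<sigma>[k:=c]) * P \<sigma> * H k (ins i (a-c) (map (\<lambda>t. t-c) (tt!k))))"
      by (subst sum_split[OF assms(2,4)]) (auto intro!: sum.cong simp: Pupd upk)
    finally show ?thesis using True unfolding P_def ss_def by simp
  qed
qed

lemma frank_le_card2:
  assumes "finite I" "\<And>a. a \<in> A \<Longrightarrow> \<exists>v. R a = (\<lambda>x. \<Sum>j\<in>I. v j * F j x)"
  shows "frank (R ` A) \<le> card I"
proof -
  have "frank (R ` A) \<le> card (F ` I)"
    unfolding frank_def
  proof (rule vector_space.dim_le_card[OF vs])
    show "finite (F ` I)" using assms by simp
    show "R ` A \<subseteq> module.span (\<lambda>c f x. c * f x) (F ` I)"
    proof
      fix f assume "f \<in> R ` A"
      then obtain a v where f: "f = (\<lambda>x. \<Sum>j\<in>I. v j * F j x)" using assms(2) by blast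
      have "f = (\<Sum>j\<in>I. (\<lambda>x. v j * F j x))" using f by (auto simp: sum_fun_apply fun_eq_iff)
      also have "\<dots> \<in> module.span (\<lambda>c f x. c * f x) (F ` I)"
      proof (intro module.span_sum[OF ms])
        fix j assume "j \<in> I"
        then show "(\<lambda>x. v j * F j x) \<in> module.span (\<lambda>c f x. c * f x) (F ` I)"
          using module.span_scale[OF ms module.span_base[OF ms], of "F j" "F ` I" "v j"] by simp
      qed
      finally show "f \<in> module.span (\<lambda>c f x. c * f x) (F ` I)" .
    qed
  qed
  also have "\<dots> \<le> card I" by (rule card_image_le[OF assms(1)])
  finally show ?thesis .
qed

lemma Hrow_zero:
  assumes "is_tensor ds A" "i < length ds" "\<not> (0 \<le> b \<and> b < int (ds!i))"
  shows "A (ins i b r) = 0"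
proof -
  have "ins i b r \<notin> tbox ds"
  proof
    assume *: "ins i b r \<in> tbox ds"
    then have l: "length ds = Suc (length r)" by (simp add: tbox_def)
    then have "i \<le> length r" using assms(2) by simp
    then have "ins i b r ! i = b" by (simp add: ins_nth)
    then show False using * assms(2,3) by (auto simp: tbox_def)
  qed
  then show ?thesis using assms(1) by (simp add: is_tensor_def)
qed

lemma case_general:
  fixes z :: "nat list" and m :: "nat list list" and G :: "int list \<Rightarrow> real" and H :: "nat \<Rightarrow> int list \<Rightarrow> real"
  assumes "length m = length z" "k < length z" "i < length (m!k)" "0 < z!k" "is_tensor (m!k) (H k)"
  shows "tucker_rank2 k i (z!k + m!k!i - 1) (outer_conv z m G H) \<le> z!k * tucker_rank i (m!k!i) (H k)"
proof -
  define Hrow where "Hrow = (\<lambda>b r. H k (ins i b r))"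
  have tr: "tucker_rank i (m!k!i) (H k) = frank (Hrow ` {0..<int (m!k!i)})"
    by (simp add: tucker_rank_def Hrow_def ins_def)
  obtain B where B: "finite B" "card B = frank (Hrow ` {0..<int (m!k!i)})"
    "\<And>b. b \<in> {0..<int (m!k!i)} \<Longrightarrow> \<exists>v. Hrow b = (\<lambda>x. \<Sum>\<beta>\<in>B. v \<beta> * \<beta> x)"
    using frank_basis[of "{0..<int (m!k!i)}" Hrow] by auto
  have "\<forall>b. \<exists>v. Hrow b = (\<lambda>x. \<Sum>\<beta>\<in>B. v \<beta> * \<beta> x)"
  proof
    fix b
    show "\<exists>v. Hrow b = (\<lambda>x. \<Sum>\<beta>\<in>B. v \<beta> * \<beta> x)"
    proof (cases "b \<in> {0..<int (m!k!i)}")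
      case True then show ?thesis using B(3) by blast
    next
      case False
      show ?thesis
        apply (rule exI[of _ "\<lambda>_. 0"])
        using False Hrow_zero[OF assms(5) assms(3)] by (auto simp: Hrow_def fun_eq_iff)
    qed
  qed
  then obtain u where u: "\<And>b. Hrow b = (\<lambda>x. \<Sum>\<beta>\<in>B. u b \<beta> * \<beta> x)" by metis
  define grd where "grd = (\<lambda>tt. tt[k:=ins i 0 (tt!k)] \<in> tbox2 (oconv_dims z m))"
  define P where "P = (\<lambda>\<sigma> tt. \<Prod>j\<in>{..<length z}-{k}. H j (map (\<lambda>t. t - \<sigma>!j) (tt!j)))"
  define Z0 where "Z0 = {\<sigma>\<in>tbox z. \<sigma>!k=0}"
  define F where "F = (\<lambda>(c,\<beta>) tt. if grd tt then
      (\<Sum>\<sigma>\<in>Z0. G (\<sigma>[k:=c]) * P \<sigma> tt * \<beta> (map (\<lambda>t. t-c) (tt!k))) else 0)"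
  define I where "I = {0..<int (z!k)} \<times> B"
  define R where "R = (\<lambda>a tt. outer_conv z m G H (tt[k := take i (tt ! k) @ a # drop i (tt ! k)]))"
  have "frank (R ` {0..<int (z!k + m!k!i - 1)}) \<le> card I"
  proof (rule frank_le_card2)
    show "finite I" using B(1) by (simp add: I_def)
    fix a assume a: "a \<in> {0..<int (z!k + m!k!i - 1)}"
    have "R a tt = (\<Sum>j\<in>I. (case j of (c,\<beta>) \<Rightarrow> u (a-c) \<beta>) * F j tt)" for tt
    proof -
      have "R a tt = (if grd tt then
        (\<Sum>c\<in>{0..<int(z!k)}. \<Sum>\<sigma>\<in>Z0. G (\<sigma>[k:=c]) * P \<sigma> tt
           * (\<Sum>\<beta>\<in>B. u (a-c) \<beta> * \<beta> (map (\<lambda>t. t-c) (tt!k)))) else 0)"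
        unfolding R_def ins_def[symmetric] grd_def P_def Z0_def
        using decomp[OF assms(1-4), where a=a and tt=tt and G=G and H=H] a u[unfolded Hrow_def] by (simp add: fun_eq_iff)
      also have "\<dots> = (\<Sum>c\<in>{0..<int(z!k)}. \<Sum>\<beta>\<in>B. u (a-c) \<beta> * F (c,\<beta>) tt)"
      proof (cases "grd tt")
        case True
        have "(\<Sum>\<sigma>\<in>Z0. G (\<sigma>[k:=c]) * P \<sigma> tt
           * (\<Sum>\<beta>\<in>B. u (a-c) \<beta> * \<beta> (map (\<lambda>t. t-c) (tt!k))))
          = (\<Sum>\<beta>\<in>B. u (a-c) \<beta> * F (c,\<beta>) tt)" for c
          using True unfolding F_def
          by (simp add: sum_distrib_left sum_distrib_right mult_ac sum.swap[of _ Z0])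
        then show ?thesis using True by simp
      qed (simp add: F_def)
      also have "\<dots> = (\<Sum>j\<in>I. (case j of (c,\<beta>) \<Rightarrow> u (a-c) \<beta>) * F j tt)"
        unfolding I_def by (subst sum.cartesian_product) (simp add: case_prod_unfold)
      finally show ?thesis .
    qed
    then show "\<exists>v. R a = (\<lambda>x. \<Sum>j\<in>I. v j * F j x)" by blast
  qed
  moreover have "card I = z!k * tucker_rank i (m!k!i) (H k)"
    using B tr by (simp add: I_def card_cartesian_product)
  ultimately show ?thesis unfolding tucker_rank2_def R_def by simp
qed

lemma case_one:
  fixes z :: "nat list" and m :: "nat list list" and G :: "int list \<Rightarrow> real" and H :: "nat \<Rightarrow> int list \<Rightarrow> real"
  assumes "length m = length z" "k < length z" "length (m!k) = 1" "0 < z!k"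
  shows "tucker_rank2 k 0 (z!k + m!k!0 - 1) (outer_conv z m G H) \<le> tucker_rank k (z!k) G"
proof -
  have i0: "0 < length (m!k)" using assms(3) by simp
  define Grow where "Grow = (\<lambda>c r. G (ins k c r))"
  have tr: "tucker_rank k (z!k) G = frank (Grow ` {0..<int (z!k)})"
    by (simp add: tucker_rank_def Grow_def ins_def)
  obtain B where B: "finite B" "card B = frank (Grow ` {0..<int (z!k)})"
    "\<And>b. b \<in> {0..<int (z!k)} \<Longrightarrow> \<exists>v. Grow b = (\<lambda>x. \<Sum>\<beta>\<in>B. v \<beta> * \<beta> x)"
    using frank_basis[of "{0..<int (z!k)}" Grow] by auto
  have "\<exists>u. \<forall>b\<in>{0..<int (z!k)}. Grow b = (\<lambda>x. \<Sum>\<beta>\<in>B. u b \<beta> * \<beta> x)"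
    by (rule bchoice) (use B(3) in blast)
  then obtain u where u0: "\<forall>b\<in>{0..<int (z!k)}. Grow b = (\<lambda>x. \<Sum>\<beta>\<in>B. u b \<beta> * \<beta> x)" by blast
  have u: "\<And>b. b \<in> {0..<int (z!k)} \<Longrightarrow> Grow b = (\<lambda>x. \<Sum>\<beta>\<in>B. u b \<beta> * \<beta> x)"
    using u0 by blast
  define grd where "grd = (\<lambda>tt. tt[k:=ins 0 0 (tt!k)] \<in> tbox2 (oconv_dims z m))"
  define P where "P = (\<lambda>\<sigma> tt. \<Prod>j\<in>{..<length z}-{k}. H j (map (\<lambda>t. t - \<sigma>!j) (tt!j)))"
  define Z0 where "Z0 = {\<sigma>\<in>tbox z. \<sigma>!k=0}"
  define X where "X = (\<lambda>\<sigma>::int list. take k \<sigma> @ drop (Suc k) \<sigma>)"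
  define F where "F = (\<lambda>\<beta> tt. if grd tt then (\<Sum>\<sigma>\<in>Z0. \<beta> (X \<sigma>) * P \<sigma> tt) else 0)"
  define R where "R = (\<lambda>a tt. outer_conv z m G H (tt[k := take 0 (tt ! k) @ a # drop 0 (tt ! k)]))"
  have GX: "G (\<sigma>[k:=c]) = (\<Sum>\<beta>\<in>B. u c \<beta> * \<beta> (X \<sigma>))" if "\<sigma> \<in> tbox z" "c \<in> {0..<int (z!k)}" for \<sigma> c
  proof -
    have l: "k < length \<sigma>" using that assms(2) by (simp add: tbox_def)
    have "\<sigma>[k:=c] = ins k c (X \<sigma>)"
      using l by (simp add: ins_def X_def upd_conv_take_nth_drop min_def)
    then show ?thesis using u[OF that(2)] by (simp add: Grow_def fun_eq_iff)
  qed
  have grdk: "tt!k = []" if "grd tt" for tt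
  proof -
    have "length (oconv_dims z m) = length z" "oconv_dims z m ! k = map (\<lambda>mi. z ! k + mi - 1) (m ! k)"
      using assms(2) by (simp_all add: oconv_dims_def)
    moreover have "length tt = length z" using that \<open>length (oconv_dims z m) = length z\<close> by (simp add: grd_def tbox2_def)
    ultimately have "ins 0 0 (tt!k) \<in> tbox (map (\<lambda>mi. z ! k + mi - 1) (m ! k))"
      using that assms(2) by (auto simp: grd_def tbox2_def)
    then show ?thesis using assms(3) by (simp add: tbox_def ins_def)
  qed
  have "frank (R ` {0..<int (z!k + m!k!0 - 1)}) \<le> card B"
  proof (rule frank_le_card2[where F = F])
    show "finite B" by (rule B(1))
    fix a assume a: "a \<in> {0..<int (z!k + m!k!0 - 1)}"
    have "R a tt = (\<Sum>\<beta>\<in>B. (\<Sum>c\<in>{0..<int(z!k)}. u c \<beta> * H k [a-c]) * F \<beta> tt)" for tt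
    proof (cases "grd tt")
      case True
      have "R a tt = (\<Sum>c\<in>{0..<int(z!k)}. \<Sum>\<sigma>\<in>Z0. G (\<sigma>[k:=c]) * P \<sigma> tt * H k [a-c])"
        unfolding R_def ins_def[symmetric] P_def Z0_def
        using decomp[OF assms(1,2) i0 assms(4), where a=a and tt=tt and G=G and H=H] a True grdk[OF True]
        by (simp add: grd_def ins_def)
      also have "\<dots> = (\<Sum>c\<in>{0..<int(z!k)}. \<Sum>\<sigma>\<in>Z0. (\<Sum>\<beta>\<in>B. u c \<beta> * \<beta> (X \<sigma>)) * P \<sigma> tt * H k [a-c])"
        by (intro sum.cong refl) (simp add: GX Z0_def)
      also have "\<dots> = (\<Sum>\<beta>\<in>B. (\<Sum>c\<in>{0..<int(z!k)}. u c \<beta> * H k [a-c]) * F \<beta> tt)"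
      proof -
        have e1: "(\<Sum>\<sigma>\<in>Z0. (\<Sum>\<beta>\<in>B. u c \<beta> * \<beta> (X \<sigma>)) * P \<sigma> tt * H k [a-c])
          = (\<Sum>\<beta>\<in>B. \<Sum>\<sigma>\<in>Z0. u c \<beta> * H k [a-c] * (\<beta> (X \<sigma>) * P \<sigma> tt))" for c
        proof -
          have "(\<Sum>\<sigma>\<in>Z0. (\<Sum>\<beta>\<in>B. u c \<beta> * \<beta> (X \<sigma>)) * P \<sigma> tt * H k [a-c])
            = (\<Sum>\<sigma>\<in>Z0. \<Sum>\<beta>\<in>B. u c \<beta> * H k [a-c] * (\<beta> (X \<sigma>) * P \<sigma> tt))"
            by (intro sum.cong refl) (simp add: sum_distrib_left sum_distrib_right mult_ac)
          also have "\<dots> = (\<Sum>\<beta>\<in>B. \<Sum>\<sigma>\<in>Z0. u c \<beta> * H k [a-c] * (\<beta> (X \<sigma>) * P \<sigma> tt))"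
            by (rule sum.swap)
          finally show ?thesis .
        qed
        have "(\<Sum>c\<in>{0..<int(z!k)}. \<Sum>\<sigma>\<in>Z0. (\<Sum>\<beta>\<in>B. u c \<beta> * \<beta> (X \<sigma>)) * P \<sigma> tt * H k [a-c])
          = (\<Sum>c\<in>{0..<int(z!k)}. \<Sum>\<beta>\<in>B. \<Sum>\<sigma>\<in>Z0. u c \<beta> * H k [a-c] * (\<beta> (X \<sigma>) * P \<sigma> tt))"
          by (simp only: e1)
        also have "\<dots> = (\<Sum>\<beta>\<in>B. \<Sum>c\<in>{0..<int(z!k)}. \<Sum>\<sigma>\<in>Z0. u c \<beta> * H k [a-c] * (\<beta> (X \<sigma>) * P \<sigma> tt))"
          by (rule sum.swap)
        also have "\<dots> = (\<Sum>\<beta>\<in>B. (\<Sum>c\<in>{0..<int(z!k)}. u c \<beta> * H k [a-c]) * F \<beta> tt)"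
          using True unfolding F_def
          by (intro sum.cong refl) (simp add: sum_distrib_left sum_distrib_right mult_ac)
        finally show ?thesis .
      qed
      finally show ?thesis .
    next
      case False
      then show ?thesis
        unfolding R_def ins_def[symmetric] F_def
        using decomp[OF assms(1,2) i0 assms(4), where a=a and tt=tt and G=G and H=H] a
        by (simp add: grd_def)
    qed
    then show "\<exists>v. R a = (\<lambda>x. \<Sum>j\<in>B. v j * F j x)"
      by (intro exI[of _ "\<lambda>\<beta>. \<Sum>c\<in>{0..<int(z!k)}. u c \<beta> * H k [a-c]"]) (simp add: fun_eq_iff)
  qed
  then show ?thesis using B(2) tr unfolding tucker_rank2_def R_def by simp
qed

theorem theorem31:
  fixes z :: "nat list" and m :: "nat list list"
    and G :: "int list \<Rightarrow> real" and H :: "nat \<Rightarrow> int list \<Rightarrow> real"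
  assumes "length m = length z"
    and "\<forall>zk\<in>set z. 0 < zk"
    and "\<forall>k<length z. m ! k \<noteq> [] \<and> (\<forall>mi\<in>set (m ! k). 0 < mi)"
    and "is_tensor z G"
    and "\<forall>k<length z. is_tensor (m ! k) (H k)"
  shows "\<forall>k<length z. \<forall>i<length (m ! k).
           tucker_rank2 k i (z ! k + m ! k ! i - 1) (outer_conv z m G H)
             \<le> (if length (m ! k) = 1
                 then min (z ! k + m ! k ! 0 - 1) (tucker_rank k (z ! k) G)
                 else min (z ! k + m ! k ! i - 1) (z ! k * tucker_rank i (m ! k ! i) (H k)))"
proof (intro allI impI)
  fix k i assume k: "k < length z" and i: "i < length (m ! k)"
  have zk: "0 < z!k" using assms(2) k by simp
  have b1: "tucker_rank2 k i (z ! k + m ! k ! i - 1) (outer_conv z m G H) \<le> z ! k + m ! k ! i - 1"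
    unfolding tucker_rank2_def by (rule frank_le_N)
  show "tucker_rank2 k i (z ! k + m ! k ! i - 1) (outer_conv z m G H)
             \<le> (if length (m ! k) = 1
                 then min (z ! k + m ! k ! 0 - 1) (tucker_rank k (z ! k) G)
                 else min (z ! k + m ! k ! i - 1) (z ! k * tucker_rank i (m ! k ! i) (H k)))"
  proof (cases "length (m ! k) = 1")
    case True
    then have "i = 0" using i by simp
    then show ?thesis using True b1 case_one[OF assms(1) k True zk, where G=G and H=H] by simp
  next
    case False
    then show ?thesis using b1 case_general[OF assms(1) k i zk, where G=G and H=H] assms(5) k by simp
  qed
qed

end
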